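(* Let $\vec W$ be an irreducible $\mathcal Y$-valued transition matrix on $\mathcal X$. For every $g'\in\mathcal G$ there exists a unique $g\in\mathcal G_1$ with $g-g'\in\mathcal N$. Consequently $\mathcal G_1$ is a complement of $\mathcal N$ in $\mathcal G$, and the quotient map restricts to a linear isomorphism $\mathcal G_1\cong\mathcal G/\mathcal N$.
   Context: Let $\mathcal X=\{1,\dots,d\}$, $\mathcal Y=\{1,\dots,d_Y\}$ be finite sets, $u_{\mathcal X}\in\mathbb R^{\mathcal X}$ the all-ones vector. A $\mathcal Y$-valued transition matrix on $\mathcal X$ is a family $\vec W=(W_y)_{y\in\mathcal Y}$ of $d\times d$ nonnegative matrices $W_y(x|x')$ ($x$ row, $x'$ column) with $|\vec W|:=\sum_yW_y$ column-stochastic; irreducible means $|\vec W|$ irreducible. Let $S:=\{(y,x,x'):W_y(x|x')>0\}$ be the support of $\vec W$ and $\mathcal G$ the vector space of real functions on $S$; an element $g\in\mathcal G$ is identified with the tuple $(g_y)_y$ of $d\times d$ matrices $g_y(x|x')=g(y,x,x')$ (set to $0$ off $S$). Define $(\vec W_*g)_y(x|x'):=g(y,x,x')W_y(x|x')$. $\mathcal N:=\{g\in\mathcal G:\ g(y,x,x')=f(x)-f(x')+c$ on $S$ for some $f:\mathcal X\to\mathbb R$, $c\in\mathbb R\}$. $\mathcal G_1:=\{g\in\mathcal G:\ \sum_{y}(\vec W_*g)_y^Tu_{\mathcal X}=0\}$, i.e. $\sum_{y,x}g(y,x,x')W_y(x|x')=0$ for all $x'$. *)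

theory Defs
  imports Complex_Main
begin

text \<open>A Y-valued transition matrix on X is represented by
  W :: 'y => 'x => 'x => real, with W y x x' = W_y(x|x') (x row, x' column).
  X and Y are finite types.\<close>

definition abs_W :: "('y::finite \<Rightarrow> 'x::finite \<Rightarrow> 'x \<Rightarrow> real) \<Rightarrow> 'x \<Rightarrow> 'x \<Rightarrow> real" where
  "abs_W W x x' = (\<Sum>y\<in>UNIV. W y x x')"

definition transition_matrix :: "('y::finite \<Rightarrow> 'x::finite \<Rightarrow> 'x \<Rightarrow> real) \<Rightarrow> bool" where
  "transition_matrix W \<longleftrightarrow> (\<forall>y x x'. 0 \<le> W y x x') \<and>
     (\<forall>x'. (\<Sum>x\<in>UNIV. abs_W W x x') = 1)"

definition irreducible_matrix :: "('x::finite \<Rightarrow> 'x \<Rightarrow> real) \<Rightarrow> bool" where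
  "irreducible_matrix A \<longleftrightarrow> (\<forall>i j. (i, j) \<in> {(x', x). A x x' > 0}\<^sup>*)"

definition irreducible_tm :: "('y::finite \<Rightarrow> 'x::finite \<Rightarrow> 'x \<Rightarrow> real) \<Rightarrow> bool" where
  "irreducible_tm W \<longleftrightarrow> transition_matrix W \<and> irreducible_matrix (abs_W W)"

definition supp :: "('y \<Rightarrow> 'x \<Rightarrow> 'x \<Rightarrow> real) \<Rightarrow> ('y \<times> 'x \<times> 'x) set" where
  "supp W = {(y, x, x'). W y x x' > 0}"

text \<open>G: real functions on the support, extended by 0 off the support.\<close>
definition GG :: "('y \<Rightarrow> 'x \<Rightarrow> 'x \<Rightarrow> real) \<Rightarrow> ('y \<Rightarrow> 'x \<Rightarrow> 'x \<Rightarrow> real) set" where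
  "GG W = {g. \<forall>y x x'. (y, x, x') \<notin> supp W \<longrightarrow> g y x x' = 0}"

definition NN :: "('y \<Rightarrow> 'x \<Rightarrow> 'x \<Rightarrow> real) \<Rightarrow> ('y \<Rightarrow> 'x \<Rightarrow> 'x \<Rightarrow> real) set" where
  "NN W = {g \<in> GG W. \<exists>(f::'x \<Rightarrow> real) (c::real).
      \<forall>y x x'. (y, x, x') \<in> supp W \<longrightarrow> g y x x' = f x - f x' + c}"

definition G1 :: "('y::finite \<Rightarrow> 'x::finite \<Rightarrow> 'x \<Rightarrow> real) \<Rightarrow> ('y \<Rightarrow> 'x \<Rightarrow> 'x \<Rightarrow> real) set" where
  "G1 W = {g \<in> GG W. \<forall>x'. (\<Sum>y\<in>UNIV. \<Sum>x\<in>UNIV. g y x x' * W y x x') = 0}"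

end

theory Submission imports Defs "HOL-Analysis.Analysis" begin

lemma maxprinc:
  fixes A :: "'x::finite \<Rightarrow> 'x \<Rightarrow> real"
  assumes nn: "\<And>x x'. 0 \<le> A x x'" and st: "\<And>x'. (\<Sum>x\<in>UNIV. A x x') = 1"
    and irr: "irreducible_matrix A"
    and eq: "\<And>x'. (\<Sum>x\<in>UNIV. A x x' * f x) = f x' - c"
  shows "c = 0 \<and> (\<forall>x y. f x = f y)"
proof -
  define m where "m = Max (range f)"
  define m' where "m' = Min (range f)"
  have "m \<in> range f" unfolding m_def by (rule Max_in) auto
  then obtain p where p: "f p = m" by auto
  have "m' \<in> range f" unfolding m'_def by (rule Min_in) auto
  then obtain q where q: "f q = m'" by auto
  have fm: "\<And>x. f x \<le> m" unfolding m_def by simp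
  have fm': "\<And>x. m' \<le> f x" unfolding m'_def by simp
  have "(\<Sum>x\<in>UNIV. A x p * f x) \<le> (\<Sum>x\<in>UNIV. A x p * m)"
    by (intro sum_mono mult_left_mono fm nn)
  also have "\<dots> = m" using st[of p] by (simp add: sum_distrib_right[symmetric])
  finally have c1: "c \<ge> 0" using eq[of p] p by simp
  have "(\<Sum>x\<in>UNIV. A x q * f x) \<ge> (\<Sum>x\<in>UNIV. A x q * m')"
    by (intro sum_mono mult_left_mono fm' nn)
  moreover have "(\<Sum>x\<in>UNIV. A x q * m') = m'" using st[of q] by (simp add: sum_distrib_right[symmetric])
  ultimately have c2: "c \<le> 0" using eq[of q] q by simp
  have c0: "c = 0" using c1 c2 by simp
  have stepm: "f z = m" if y: "f y = m" and a: "A z y > 0" for y z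
  proof -
    have "(\<Sum>x\<in>UNIV. A x y * (m - f x)) = m * (\<Sum>x\<in>UNIV. A x y) - (\<Sum>x\<in>UNIV. A x y * f x)"
      by (simp add: right_diff_distrib sum_subtractf sum_distrib_left mult.commute)
    hence "(\<Sum>x\<in>UNIV. A x y * (m - f x)) = 0"
      using eq[of y] st[of y] y c0 by simp
    moreover have "\<forall>x\<in>UNIV. 0 \<le> A x y * (m - f x)" using nn fm by simp
    ultimately have "A z y * (m - f z) = 0"
      using sum_nonneg_eq_0_iff[of UNIV "\<lambda>x. A x y * (m - f x)"] by simp
    thus ?thesis using a by simp
  qed
  have all: "f j = m" for j
  proof -
    have "(p, j) \<in> {(x', x). A x x' > 0}\<^sup>*" using irr unfolding irreducible_matrix_def by blast
    thus ?thesis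
    proof (induction rule: rtrancl_induct)
      case base thus ?case using p by simp
    next
      case (step y z) thus ?case using stepm by auto
    qed
  qed
  show ?thesis using c0 all by simp
qed

lemma solve:
  fixes A :: "'x::finite \<Rightarrow> 'x \<Rightarrow> real"
  assumes nn: "\<And>x x'. 0 \<le> A x x'" and st: "\<And>x'. (\<Sum>x\<in>UNIV. A x x') = 1"
    and irr: "irreducible_matrix A"
  shows "\<exists>f. \<forall>x'. (\<Sum>x\<in>UNIV. A x x' * f x) - f x' + f x0 = b x'"
proof -
  define M :: "real^'x \<Rightarrow> real^'x" where
    "M v = (\<chi> x'. (\<Sum>x\<in>UNIV. A x x' * v$x) - v$x' + v$x0)" for v
  have lin: "linear M"
    by (rule linearI) (auto simp: M_def vec_eq_iff sum.distrib algebra_simps sum_distrib_left)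
  have inj: "inj M"
  proof (rule injI)
    fix u v assume "M u = M v"
    hence z: "M (u - v) = 0" using linear_diff[OF lin] by simp
    define f where "f = (\<lambda>x. (u - v)$x)"
    have "\<And>x'. (\<Sum>x\<in>UNIV. A x x' * f x) = f x' - f x0"
      using z unfolding M_def f_def vec_eq_iff by (auto simp: algebra_simps)
    from maxprinc[OF nn st irr this] have "\<forall>x. f x = 0" by (metis diff_self)
    thus "u = v" unfolding f_def by (simp add: vec_eq_iff)
  qed
  have "surj M" using linear_inj_imp_surj[OF lin inj] .
  then obtain v where "M v = (\<chi> x. b x)" by (metis surjD)
  hence "\<forall>x'. (\<Sum>x\<in>UNIV. A x x' * v$x) - v$x' + v$x0 = b x'"
    unfolding M_def vec_eq_iff by simp
  thus ?thesis by blast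
qed

lemma wsum:
  fixes W :: "'y::finite \<Rightarrow> 'x::finite \<Rightarrow> 'x \<Rightarrow> real"
  shows "(\<Sum>y\<in>UNIV. \<Sum>x\<in>UNIV. h x * W y x x') = (\<Sum>x\<in>UNIV. abs_W W x x' * h x)"
  by (subst sum.swap) (simp add: abs_W_def sum_distrib_left sum_distrib_right mult.commute)

lemma Wzero:
  fixes W :: "'y::finite \<Rightarrow> 'x::finite \<Rightarrow> 'x \<Rightarrow> real"
  assumes "transition_matrix W" "(y,x,x') \<notin> supp W"
  shows "W y x x' = 0"
  using assms unfolding transition_matrix_def supp_def by (metis case_prod_conv mem_Collect_eq order_le_less)

lemma zero:
  fixes W :: "'y::finite \<Rightarrow> 'x::finite \<Rightarrow> 'x \<Rightarrow> real"
  assumes tm: "transition_matrix W" and irr: "irreducible_matrix (abs_W W)"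
    and dG: "d \<in> GG W"
    and dF: "\<forall>y x x'. (y,x,x') \<in> supp W \<longrightarrow> d y x x' = F x - F x' + C"
    and d1: "\<forall>x'. (\<Sum>y\<in>UNIV. \<Sum>x\<in>UNIV. d y x x' * W y x x') = 0"
  shows "d = (\<lambda>y x x'. 0)"
proof -
  have nn: "\<And>x x'. 0 \<le> abs_W W x x'" using tm unfolding transition_matrix_def abs_W_def
    by (simp add: sum_nonneg)
  have st: "\<And>x'. (\<Sum>x\<in>UNIV. abs_W W x x') = 1" using tm unfolding transition_matrix_def by simp
  have dW: "d y x x' * W y x x' = (F x - F x' + C) * W y x x'" for y x x'
    using dF Wzero[OF tm] by (cases "(y,x,x') \<in> supp W") auto
  have eq: "(\<Sum>x\<in>UNIV. abs_W W x x' * F x) = F x' - C" for x'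
  proof -
    have "0 = (\<Sum>x\<in>UNIV. abs_W W x x' * (F x - F x' + C))"
      using d1[rule_format, of x'] wsum[of "\<lambda>x. F x - F x' + C" W x'] by (simp add: dW)
    also have "\<dots> = (\<Sum>x\<in>UNIV. abs_W W x x' * F x) - (F x' - C) * (\<Sum>x\<in>UNIV. abs_W W x x')"
      by (simp add: algebra_simps sum.distrib sum_subtractf sum_distrib_left sum_distrib_right)
    finally show ?thesis using st[of x'] by simp
  qed
  from maxprinc[OF nn st irr eq] have "C = 0" "\<And>x y. F x = F y" by auto
  thus ?thesis using dF dG unfolding GG_def by (auto intro!: ext) (metis add_0 diff_self)
qed

lemma exist:
  fixes W :: "'y::finite \<Rightarrow> 'x::finite \<Rightarrow> 'x \<Rightarrow> real"
  assumes tm: "transition_matrix W" and irr: "irreducible_matrix (abs_W W)"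
    and gG: "g' \<in> GG W"
  shows "\<exists>g. g \<in> G1 W \<and> (\<lambda>y x x'. g y x x' - g' y x x') \<in> NN W"
proof -
  have nn: "\<And>x x'. 0 \<le> abs_W W x x'" using tm unfolding transition_matrix_def abs_W_def
    by (simp add: sum_nonneg)
  have st: "\<And>x'. (\<Sum>x\<in>UNIV. abs_W W x x') = 1" using tm unfolding transition_matrix_def by simp
  define b where "b x' = - (\<Sum>y\<in>UNIV. \<Sum>x\<in>UNIV. g' y x x' * W y x x')" for x'
  obtain f where f: "\<forall>x'. (\<Sum>x\<in>UNIV. abs_W W x x' * f x) - f x' + f undefined = b x'"
    using solve[OF nn st irr] by blast
  define c where "c = f undefined"
  define n where "n y x x' = (if (y,x,x') \<in> supp W then f x - f x' + c else 0)" for y x x'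
  define g where "g y x x' = g' y x x' + n y x x'" for y x x'
  have nW: "n y x x' * W y x x' = (f x - f x' + c) * W y x x'" for y x x'
    using Wzero[OF tm] unfolding n_def by auto
  have "g \<in> G1 W"
    unfolding G1_def
  proof (intro CollectI conjI allI)
    show "g \<in> GG W" using gG unfolding GG_def g_def n_def by auto
    fix x'
    have "(\<Sum>y\<in>UNIV. \<Sum>x\<in>UNIV. g y x x' * W y x x')
        = (\<Sum>y\<in>UNIV. \<Sum>x\<in>UNIV. g' y x x' * W y x x') + (\<Sum>y\<in>UNIV. \<Sum>x\<in>UNIV. (f x - f x' + c) * W y x x')"
      unfolding g_def by (simp only: distrib_right sum.distrib nW)
    also have "(\<Sum>y\<in>UNIV. \<Sum>x\<in>UNIV. (f x - f x' + c) * W y x x') = (\<Sum>x\<in>UNIV. abs_W W x x' * (f x - f x' + c))"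
      using wsum[of "\<lambda>x. f x - f x' + c" W x'] by simp
    also have "\<dots> = (\<Sum>x\<in>UNIV. abs_W W x x' * f x) - (f x' - c) * (\<Sum>x\<in>UNIV. abs_W W x x')"
      by (simp add: algebra_simps sum.distrib sum_subtractf sum_distrib_left sum_distrib_right)
    finally show "(\<Sum>y\<in>UNIV. \<Sum>x\<in>UNIV. g y x x' * W y x x') = 0"
      using st[of x'] f[rule_format, of x'] unfolding b_def c_def by simp
  qed
  moreover have "(\<lambda>y x x'. g y x x' - g' y x x') \<in> NN W"
    unfolding NN_def
  proof (intro CollectI conjI exI[of _ f] exI[of _ c])
    show "(\<lambda>y x x'. g y x x' - g' y x x') \<in> GG W" unfolding GG_def g_def n_def by simp
    show "\<forall>y x x'. (y, x, x') \<in> supp W \<longrightarrow> g y x x' - g' y x x' = f x - f x' + c"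
      unfolding g_def n_def by simp
  qed
  ultimately show ?thesis by blast
qed

theorem mainTheorem8:
  fixes W :: "'y::finite \<Rightarrow> 'x::finite \<Rightarrow> 'x \<Rightarrow> real"
  assumes "irreducible_tm W"
  shows "(\<forall>g' \<in> GG W. \<exists>!g. g \<in> G1 W \<and> (\<lambda>y x x'. g y x x' - g' y x x') \<in> NN W)
         \<and> G1 W \<inter> NN W = {\<lambda>y x x'. 0}
         \<and> GG W = {(\<lambda>y x x'. g1 y x x' + n y x x') | g1 n. g1 \<in> G1 W \<and> n \<in> NN W}"
proof -
  have tm: "transition_matrix W" and irr: "irreducible_matrix (abs_W W)"
    using assms unfolding irreducible_tm_def by auto
  have P1: "\<forall>g' \<in> GG W. \<exists>!g. g \<in> G1 W \<and> (\<lambda>y x x'. g y x x' - g' y x x') \<in> NN W"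
  proof
    fix g' assume gG: "g' \<in> GG W"
    show "\<exists>!g. g \<in> G1 W \<and> (\<lambda>y x x'. g y x x' - g' y x x') \<in> NN W"
    proof (rule ex_ex1I)
      show "\<exists>g. g \<in> G1 W \<and> (\<lambda>y x x'. g y x x' - g' y x x') \<in> NN W" using exist[OF tm irr gG] .
    next
      fix g1 g2
      assume a: "g1 \<in> G1 W \<and> (\<lambda>y x x'. g1 y x x' - g' y x x') \<in> NN W"
        and b: "g2 \<in> G1 W \<and> (\<lambda>y x x'. g2 y x x' - g' y x x') \<in> NN W"
      obtain f1 c1 where f1: "\<forall>y x x'. (y,x,x') \<in> supp W \<longrightarrow> g1 y x x' - g' y x x' = f1 x - f1 x' + c1"
        using a unfolding NN_def by auto
      obtain f2 c2 where f2: "\<forall>y x x'. (y,x,x') \<in> supp W \<longrightarrow> g2 y x x' - g' y x x' = f2 x - f2 x' + c2"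
        using b unfolding NN_def by auto
      define d where "d y x x' = g1 y x x' - g2 y x x'" for y x x'
      have "d = (\<lambda>y x x'. 0)"
      proof (rule zero[OF tm irr, where F = "\<lambda>x. f1 x - f2 x" and C = "c1 - c2"])
        show "d \<in> GG W" using a b unfolding G1_def GG_def d_def by auto
        show "\<forall>y x x'. (y,x,x') \<in> supp W \<longrightarrow> d y x x' = (f1 x - f2 x) - (f1 x' - f2 x') + (c1 - c2)"
          proof (intro allI impI)
          fix y x x' assume s: "(y,x,x') \<in> supp W"
          have "g1 y x x' = g' y x x' + (f1 x - f1 x' + c1)" using f1 s by (metis add.commute diff_add_cancel)
          moreover have "g2 y x x' = g' y x x' + (f2 x - f2 x' + c2)" using f2 s by (metis add.commute diff_add_cancel)
          ultimately show "d y x x' = (f1 x - f2 x) - (f1 x' - f2 x') + (c1 - c2)" unfolding d_def by simp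
        qed
        show "\<forall>x'. (\<Sum>y\<in>UNIV. \<Sum>x\<in>UNIV. d y x x' * W y x x') = 0"
          using a b unfolding G1_def d_def by (simp add: left_diff_distrib sum_subtractf)
      qed
      thus "g1 = g2" unfolding d_def by (auto simp: fun_eq_iff)
    qed
  qed
  have P2: "G1 W \<inter> NN W = {\<lambda>y x x'. 0}"
  proof
    show "G1 W \<inter> NN W \<subseteq> {\<lambda>y x x'. 0}"
    proof
      fix h assume h: "h \<in> G1 W \<inter> NN W"
      then obtain F C where "\<forall>y x x'. (y,x,x') \<in> supp W \<longrightarrow> h y x x' = F x - F x' + C"
        unfolding NN_def by auto
      moreover have "h \<in> GG W" "\<forall>x'. (\<Sum>y\<in>UNIV. \<Sum>x\<in>UNIV. h y x x' * W y x x') = 0"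
        using h unfolding G1_def by auto
      ultimately have "h = (\<lambda>y x x'. 0)" using zero[OF tm irr] by blast
      thus "h \<in> {\<lambda>y x x'. 0}" by simp
    qed
    show "{\<lambda>y x x'. 0} \<subseteq> G1 W \<inter> NN W"
    proof -
      have "(\<lambda>y x x'. 0::real) \<in> G1 W" unfolding G1_def GG_def by simp
      moreover have "(\<lambda>y x x'. 0::real) \<in> NN W" unfolding NN_def
      proof (intro CollectI conjI exI[of _ "\<lambda>x. 0::real"] exI[of _ "0::real"])
        show "(\<lambda>y x x'. 0::real) \<in> GG W" unfolding GG_def by simp
      qed simp
      ultimately show ?thesis by simp
    qed
  qed
  have P3: "GG W = {(\<lambda>y x x'. g1 y x x' + n y x x') | g1 n. g1 \<in> G1 W \<and> n \<in> NN W}"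
  proof
    show "GG W \<subseteq> {(\<lambda>y x x'. g1 y x x' + n y x x') | g1 n. g1 \<in> G1 W \<and> n \<in> NN W}"
    proof
      fix g' assume gG: "g' \<in> GG W"
      obtain g where g: "g \<in> G1 W" and gn: "(\<lambda>y x x'. g y x x' - g' y x x') \<in> NN W"
        using exist[OF tm irr gG] by blast
      obtain f c where fc: "\<forall>y x x'. (y,x,x') \<in> supp W \<longrightarrow> g y x x' - g' y x x' = f x - f x' + c"
        using gn unfolding NN_def by auto
      have "(\<lambda>y x x'. g' y x x' - g y x x') \<in> NN W"
        unfolding NN_def
      proof (intro CollectI conjI exI[of _ "\<lambda>x. - f x"] exI[of _ "- c"])
        show "(\<lambda>y x x'. g' y x x' - g y x x') \<in> GG W" using gG g unfolding G1_def GG_def by auto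
        show "\<forall>y x x'. (y, x, x') \<in> supp W \<longrightarrow> g' y x x' - g y x x' = - f x - - f x' + - c"
          proof (intro allI impI)
          fix y x x' assume s: "(y,x,x') \<in> supp W"
          have "g y x x' - g' y x x' = f x - f x' + c" using fc s by blast
          thus "g' y x x' - g y x x' = - f x - - f x' + - c" by linarith
        qed
      qed
      hence "\<exists>g1 n. g' = (\<lambda>y x x'. g1 y x x' + n y x x') \<and> g1 \<in> G1 W \<and> n \<in> NN W"
        using g by (intro exI[of _ g] exI[of _ "\<lambda>y x x'. g' y x x' - g y x x'"]) simp
      thus "g' \<in> {(\<lambda>y x x'. g1 y x x' + n y x x') | g1 n. g1 \<in> G1 W \<and> n \<in> NN W}"
        by simp
    qed
    show "{(\<lambda>y x x'. g1 y x x' + n y x x') | g1 n. g1 \<in> G1 W \<and> n \<in> NN W} \<subseteq> GG W"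
    proof
      fix h assume "h \<in> {(\<lambda>y x x'. g1 y x x' + n y x x') | g1 n. g1 \<in> G1 W \<and> n \<in> NN W}"
      then obtain g1 n where h: "h = (\<lambda>y x x'. g1 y x x' + n y x x')" and g1: "g1 \<in> GG W" and n: "n \<in> GG W"
        unfolding G1_def NN_def by blast
      show "h \<in> GG W" using g1 n unfolding h GG_def by simp
    qed
  qed
  show ?thesis using P1 P2 P3 by blast
qed

end
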